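(* Let $N\ge1$, $s>0$, $p\in[1,\infty)$, $q\in[1,\infty)$. Then there exists $f\in L^p(\mathbb{R}^N)$ satisfying \[\sup_{0<r<s}(s-r)^{1/q}\|f\|_{\mathbf{B}^r_{p,q}(\mathbb{R}^N)}<\infty\] but $f\notin B^s_{p,\infty}(\mathbb{R}^N)$.
   Context: Subatomic (quarkonial) norm: fix a nonnegative $\psi\in C^\infty_c(\mathbb{R}^N)$ with $\mathrm{supp}\,\psi\subset B_{2^{r_0}}$ for some $r_0\ge0$ and $\sum_{k\in\mathbb{Z}^N}\psi(x-k)=1$ for all $x$, and fix $\varrho>r_0$. For $\beta\in\mathbb{N}^N$ let $\psi^\beta(x)=x^\beta\psi(x)$. For $r>0$, $p\in[1,\infty]$, $\nu\in\mathbb{N}$, $m\in\mathbb{Z}^N$, the $(r,p)$-$\beta$-quark is $(\beta\mathrm{qu})_{\nu,m}(x)=2^{-\nu(r-N/p)}\psi^\beta(2^\nu x-m)$. For coefficients $\lambda=(\lambda^\beta_{\nu,m})$ set $\|\lambda\|_{\varrho,p,q}=\sup_\beta 2^{\varrho|\beta|}\big(\sum_{\nu\ge0}(\sum_m|\lambda^\beta_{\nu,m}|^p)^{q/p}\big)^{1/q}$. Then $\|f\|_{\mathbf{B}^r_{p,q}}$ is the infimum of $\|\lambda\|_{\varrho,p,q}$ over all representations $f=\sum_\beta\sum_{\nu\ge0}\sum_m\lambda^\beta_{\nu,m}(\beta\mathrm{qu})_{\nu,m}$ in $\mathscr{S}'(\mathbb{R}^N)$ (using $(r,p)$-quarks).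 $B^s_{p,\infty}(\mathbb{R}^N)$ is the set of $f\in L^p$ with $\sup_{h\ne0}|h|^{-s}\|\Delta^M_hf\|_{L^p}<\infty$ for an integer $M>s$, where $\Delta_h^Mf(x)=\sum_{j=0}^M(-1)^{M-j}\binom Mj f(x+jh)$. *)

theory Defs
  imports "HOL-Analysis.Analysis"
begin

definition pdiff :: "'n::finite \<Rightarrow> (real^'n \<Rightarrow> real) \<Rightarrow> (real^'n \<Rightarrow> real)" where
  "pdiff i g = (\<lambda>x. frechet_derivative g (at x) (axis i 1))"

fun pdiffs :: "'n::finite list \<Rightarrow> (real^'n \<Rightarrow> real) \<Rightarrow> (real^'n \<Rightarrow> real)" where
  "pdiffs [] g = g"
| "pdiffs (i # is) g = pdiff i (pdiffs is g)"

definition smooth_fun :: "(real^'n::finite \<Rightarrow> real) \<Rightarrow> bool" where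
  "smooth_fun g \<longleftrightarrow> (\<forall>is x. pdiffs is g differentiable (at x))"

definition schwartz :: "(real^'n::finite \<Rightarrow> real) \<Rightarrow> bool" where
  "schwartz \<phi> \<longleftrightarrow> smooth_fun \<phi> \<and>
     (\<forall>is (k::nat). bounded (range (\<lambda>x. (1 + norm x) ^ k * pdiffs is \<phi> x)))"

definition int_vec :: "('n::finite \<Rightarrow> int) \<Rightarrow> real^'n" where
  "int_vec m = (\<chi> i. real_of_int (m i))"

definition admissible_psi :: "(real^'n::finite \<Rightarrow> real) \<Rightarrow> real \<Rightarrow> bool" where
  "admissible_psi \<psi> r0 \<longleftrightarrow> r0 \<ge> 0 \<and> smooth_fun \<psi> \<and> (\<forall>x. \<psi> x \<ge> 0) \<and>
     closure {x. \<psi> x \<noteq> 0} \<subseteq> ball 0 (2 powr r0) \<and>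
     (\<forall>x. ((\<lambda>k. \<psi> (x - int_vec k)) has_sum 1) UNIV)"

definition mpow :: "('n::finite \<Rightarrow> nat) \<Rightarrow> real^'n \<Rightarrow> real" where
  "mpow \<beta> x = (\<Prod>i\<in>UNIV. (x $ i) ^ (\<beta> i))"

definition mabs :: "('n::finite \<Rightarrow> nat) \<Rightarrow> nat" where
  "mabs \<beta> = (\<Sum>i\<in>UNIV. \<beta> i)"

definition quark :: "(real^'n::finite \<Rightarrow> real) \<Rightarrow> real \<Rightarrow> real \<Rightarrow> ('n \<Rightarrow> nat) \<Rightarrow> nat \<Rightarrow> ('n \<Rightarrow> int)
    \<Rightarrow> real^'n \<Rightarrow> real" where
  "quark \<psi> r p \<beta> \<nu> m x =
     2 powr (- real \<nu> * (r - real CARD('n) / p)) *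
     (let y = (2 ^ \<nu>) *\<^sub>R x - int_vec m in mpow \<beta> y * \<psi> y)"

definition ennpow :: "ennreal \<Rightarrow> real \<Rightarrow> ennreal" where
  "ennpow x a = (if x = \<infinity> then \<infinity> else ennreal (enn2real x powr a))"

definition coef_norm :: "real \<Rightarrow> real \<Rightarrow> real \<Rightarrow> (('n::finite \<Rightarrow> nat) \<Rightarrow> nat \<Rightarrow> ('n \<Rightarrow> int) \<Rightarrow> real) \<Rightarrow> ennreal" where
  "coef_norm \<rho> p q c =
     (SUP \<beta>. ennreal (2 powr (\<rho> * real (mabs \<beta>))) *
        ennpow (nn_integral (count_space UNIV)
          (\<lambda>\<nu>. ennpow (ennpow (nn_integral (count_space UNIV)
                  (\<lambda>m. ennreal (\<bar>c \<beta> \<nu> m\<bar> powr p))) (1/p)) q)) (1/q))"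

text \<open>f = sum of lambda times quarks in S': tested against every Schwartz function,
  the (absolutely convergent) series of pairings sums to the pairing with f.\<close>
definition quark_repr :: "(real^'n::finite \<Rightarrow> real) \<Rightarrow> real \<Rightarrow> real \<Rightarrow> (real^'n \<Rightarrow> real)
    \<Rightarrow> (('n \<Rightarrow> nat) \<Rightarrow> nat \<Rightarrow> ('n \<Rightarrow> int) \<Rightarrow> real) \<Rightarrow> bool" where
  "quark_repr \<psi> r p f c \<longleftrightarrow>
     (\<forall>\<phi>. schwartz \<phi> \<longrightarrow>
        ((\<lambda>(\<beta>, \<nu>, m). c \<beta> \<nu> m * integral\<^sup>L lborel (\<lambda>x. quark \<psi> r p \<beta> \<nu> m x * \<phi> x))
          has_sum integral\<^sup>L lborel (\<lambda>x. f x * \<phi> x)) UNIV)"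

definition quark_besov_norm :: "(real^'n::finite \<Rightarrow> real) \<Rightarrow> real \<Rightarrow> real \<Rightarrow> real \<Rightarrow> real
    \<Rightarrow> (real^'n \<Rightarrow> real) \<Rightarrow> ennreal" where
  "quark_besov_norm \<psi> \<rho> r p q f = (INF c\<in>{c. quark_repr \<psi> r p f c}. coef_norm \<rho> p q c)"

definition in_Lp :: "real \<Rightarrow> (real^'n::finite \<Rightarrow> real) \<Rightarrow> bool" where
  "in_Lp p f \<longleftrightarrow> f \<in> borel_measurable lborel \<and> integrable lborel (\<lambda>x. \<bar>f x\<bar> powr p)"

definition Lp_norm :: "real \<Rightarrow> (real^'n::finite \<Rightarrow> real) \<Rightarrow> real" where
  "Lp_norm p f = (integral\<^sup>L lborel (\<lambda>x. \<bar>f x\<bar> powr p)) powr (1/p)"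

definition fdiff :: "nat \<Rightarrow> real^'n::finite \<Rightarrow> (real^'n \<Rightarrow> real) \<Rightarrow> (real^'n \<Rightarrow> real)" where
  "fdiff M h f = (\<lambda>x. \<Sum>j\<le>M. (-1) ^ (M - j) * real (M choose j) * f (x + real j *\<^sub>R h))"

definition besov_inf :: "real \<Rightarrow> real \<Rightarrow> (real^'n::finite \<Rightarrow> real) \<Rightarrow> bool" where
  "besov_inf s p f \<longleftrightarrow> in_Lp p f \<and>
     (\<exists>M::nat. real M > s \<and>
        bdd_above ((\<lambda>h. norm h powr (-s) * Lp_norm p (fdiff M h f)) ` (UNIV - {0})))"

end

theory Submission imports Defs "HOL-Real_Asymp.Real_Asymp" begin

lemma poly_geo_summable:
  fixes b c :: real assumes "c > 0"
  shows "summable (\<lambda>i. real i powr b * 2 powr (-c * real i))"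
proof -
  have lim: "(\<lambda>i. real i powr b * 2 powr (-(c/2) * real i)) \<longlonglongrightarrow> 0"
    using assms by real_asymp
  hence ev: "eventually (\<lambda>i. real i powr b * 2 powr (-(c/2) * real i) \<le> 1) sequentially"
    using order_tendstoD(2)[OF lim, of 1] by (auto elim: eventually_mono)
  have geo: "summable (\<lambda>i. (2 powr (-(c/2))) ^ i)"
    using assms by (intro summable_geometric) (simp add: powr_less_one)
  show ?thesis
  proof (rule summable_comparison_test_ev[OF _ geo])
    show "eventually (\<lambda>i. norm (real i powr b * 2 powr (-c * real i)) \<le> (2 powr (-(c/2))) ^ i) sequentially"
      using ev
    proof eventually_elim
      case (elim i)
      have e0: "2 powr (-(c/2)*real i + -(c/2)*real i) = 2 powr (-(c/2) * real i) * 2 powr (-(c/2) * real i)"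
        by (rule powr_add)
      have e1: "-(c/2)*real i + -(c/2)*real i = -c * real i" by simp
      have e: "2 powr (-c * real i) = 2 powr (-(c/2) * real i) * 2 powr (-(c/2) * real i)"
        using e0 unfolding e1 .
      have p: "(2 powr (-(c/2))) ^ i = 2 powr (-(c/2) * real i)"
        by (simp add: powr_realpow[symmetric] powr_powr)
      have "norm (real i powr b * 2 powr (-c * real i)) = (real i powr b * 2 powr (-(c/2) * real i)) * 2 powr (-(c/2) * real i)"
        by (subst e) (simp add: mult.assoc)
      also have "\<dots> \<le> 1 * 2 powr (-(c/2) * real i)"
        using elim by (intro mult_right_mono) auto
      finally show ?case by (simp add: p)
    qed
  qed
qed


lemma nn_int_affine:
  fixes F :: "'a::euclidean_space \<Rightarrow> ennreal" and c :: real
  assumes [measurable]: "F \<in> borel_measurable borel" and c: "c \<noteq> 0"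
  shows "(\<integral>\<^sup>+x. F x \<partial>lborel) = ennreal (\<bar>c\<bar>^DIM('a)) * (\<integral>\<^sup>+x. F (t + c *\<^sub>R x) \<partial>lborel)"
  by (subst lborel_affine[OF c, of t])
     (simp add: nn_integral_density nn_integral_distr nn_integral_cmult)

lemma integrable_affine:
  fixes f :: "'a::euclidean_space \<Rightarrow> real"
  assumes f: "integrable lborel f" and c: "c \<noteq> 0"
  shows "integrable lborel (\<lambda>x. f (t + c *\<^sub>R x))"
  using f f[THEN borel_measurable_integrable] unfolding integrable_iff_bounded
  by (subst (asm) nn_int_affine[where c=c and t=t]) (auto simp: ennreal_mult_less_top c)

lemma int_affine:
  fixes f :: "'a::euclidean_space \<Rightarrow> real" and c :: real
  assumes c: "c \<noteq> 0" and f[measurable]: "integrable lborel f"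
  shows "(\<integral>x. f x \<partial> lborel) = \<bar>c\<bar>^DIM('a) * (\<integral>x. f (t + c *\<^sub>R x) \<partial>lborel)"
  using c f f[THEN borel_measurable_integrable] f[THEN integrable_affine, of c t]
  by (subst lborel_affine[OF c, of t]) (simp add: integral_density integral_distr)

lemma block_bound:
  fixes y :: real assumes y0: "0 \<le> y" and y1: "y \<le> 1"
  shows "(\<Sum>j<Suc J. 2^j * y^(2^j)) \<le> y + 2 * (\<Sum>n<2^J. y^n)"
proof (induction J)
  case 0
  then show ?case using y0 by simp
next
  case (Suc J)
  have blk: "2^J * y^(2^Suc J) \<le> (\<Sum>n\<in>{2^J..<2^Suc J}. y^n)"
  proof -
    have "real (card {(2::nat)^J..<2^Suc J}) * y^(2^Suc J) \<le> (\<Sum>n\<in>{2^J..<2^Suc J}. y^n)"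
      by (rule sum_bounded_below) (use y0 y1 in \<open>auto intro: power_decreasing\<close>)
    moreover have "card {(2::nat)^J..<2^Suc J} = 2^J" by simp
    ultimately show ?thesis by simp
  qed
  have spl: "(\<Sum>n<2^Suc J. y^n) = (\<Sum>n<2^J. y^n) + (\<Sum>n\<in>{2^J..<2^Suc J}. y^n)"
  proof -
    have "(\<Sum>n\<in>{0..<2^J}. y^n) + (\<Sum>n\<in>{2^J..<2^Suc J}. y^n) = (\<Sum>n\<in>{0..<2^Suc J}. y^n)"
      by (rule sum.atLeastLessThan_concat) auto
    thus ?thesis by (simp add: atLeast0LessThan)
  qed
  have "(\<Sum>j<Suc (Suc J). 2^j * y^(2^j)) = (\<Sum>j<Suc J. 2^j * y^(2^j)) + 2 * (2^J * y^(2^Suc J))"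
    by simp
  also have "\<dots> \<le> y + 2 * (\<Sum>n<2^J. y^n) + 2 * (\<Sum>n\<in>{2^J..<2^Suc J}. y^n)"
    using Suc.IH blk by linarith
  also have "\<dots> = y + 2 * (\<Sum>n<2^Suc J. y^n)" by (subst spl) (simp add: algebra_simps)
  finally show ?case .
qed

lemma geo_partial_le: fixes y :: real assumes "0 \<le> y" "y < 1"
  shows "(\<Sum>n<m. y^n) \<le> 1/(1-y)"
proof -
  have "(\<Sum>n<m. y^n) = (1 - y^m)/(1-y)" using assms by (simp add: sum_gp_strict)
  also have "\<dots> \<le> 1/(1-y)" using assms by (intro divide_right_mono) auto
  finally show ?thesis .
qed

lemma pow2_sum_bound:
  fixes y :: real assumes y0: "0 \<le> y" and y1: "y < 1"
  shows "(\<Sum>j<n. 2^j * y^(2^j)) \<le> 3/(1-y)"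
proof -
  have "(\<Sum>j<n. 2^j * y^(2^j)) \<le> (\<Sum>j<Suc n. 2^j * y^(2^j))"
    using y0 by (simp)
  also have "\<dots> \<le> y + 2 * (\<Sum>k<2^n. y^k)" using block_bound y0 y1 by simp
  also have "\<dots> \<le> 1 + 2 * (1/(1-y))" using geo_partial_le[OF y0 y1, of "2^n"] y1 by simp
  also have "\<dots> \<le> 3/(1-y)"
  proof -
    have "1 \<le> 1/(1-y)" using y0 y1 by (simp add: field_simps)
    thus ?thesis by (simp add: field_simps)
  qed
  finally show ?thesis .
qed

lemma one_minus_pow_bound:
  fixes e :: real assumes "e > 0"
  shows "1 - 2 powr (-e) \<ge> e * ln 2 / (1 + e * ln 2)"
proof -
  have pos: "e * ln 2 > 0" using assms by simp
  have "2 powr e = exp (e * ln 2)" by (simp add: powr_def mult.commute)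
  hence ge: "2 powr e \<ge> 1 + e * ln 2" using exp_ge_add_one_self by simp
  have "2 powr (-e) = 1 / 2 powr e" by (simp add: powr_minus divide_inverse)
  also have "\<dots> \<le> 1 / (1 + e * ln 2)" using ge pos by (intro divide_left_mono) auto
  finally have "2 powr (-e) \<le> 1 / (1 + e * ln 2)" .
  moreover have "1 - 1 / (1 + e * ln 2) = e * ln 2 / (1 + e * ln 2)" using pos by (simp add: field_simps)
  ultimately show ?thesis by linarith
qed

lemma sr_bound:
  fixes s r q :: real assumes "0 < r" "r < s" "q > 0"
  shows "(s - r) * (3 / (1 - 2 powr (-((s-r)*q)))) \<le> 3 * (1 + s*q*ln 2) / (q * ln 2)"
proof -
  define e where "e = (s-r)*q"
  have e: "e > 0" using assms unfolding e_def by simp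
  have le: "e \<le> s*q" using assms unfolding e_def by (simp add: mult_right_mono)
  have lb: "1 - 2 powr (-e) \<ge> e * ln 2 / (1 + e * ln 2)" by (rule one_minus_pow_bound[OF e])
  have l2: "ln (2::real) > 0" by simp
  have ep: "e * ln 2 > 0" using e l2 by (rule mult_pos_pos)
  have pos: "e * ln 2 / (1 + e * ln 2) > 0" using ep by (intro divide_pos_pos) auto
  have pos2: "1 - 2 powr (-e) > 0" using lb pos by linarith
  have "(s - r) * (3 / (1 - 2 powr (-e))) \<le> (s - r) * (3 / (e * ln 2 / (1 + e * ln 2)))"
  proof (rule mult_left_mono)
    show "3 / (1 - 2 powr (-e)) \<le> 3 / (e * ln 2 / (1 + e * ln 2))"
      by (rule divide_left_mono[OF lb]) (simp, rule mult_pos_pos[OF pos2 pos])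
  qed (use assms in simp)
  also have "\<dots> = 3 * (1 + e * ln 2) / (q * ln 2)"
    using assms e unfolding e_def by (simp add: field_simps)
  also have "\<dots> \<le> 3 * (1 + s*q*ln 2) / (q * ln 2)"
    using le assms by (intro divide_right_mono mult_left_mono) (auto intro: mult_right_mono)
  finally show ?thesis unfolding e_def .
qed

lemma diff_sum_bound:
  fixes u :: "nat \<Rightarrow> real" and p :: real assumes p: "p > 0"
  shows "\<bar>\<Sum>j\<le>M. (-1) ^ (M - j) * real (M choose j) * u j\<bar> powr p \<le> (2^M) powr p * (\<Sum>j\<le>M. \<bar>u j\<bar> powr p)"
proof -
  define m where "m = Max ((\<lambda>j. \<bar>u j\<bar>) ` {..M})"
  have fin: "finite ((\<lambda>j. \<bar>u j\<bar>) ` {..M})" by simp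
  have ne: "(\<lambda>j. \<bar>u j\<bar>) ` {..M} \<noteq> {}" by simp
  have mge: "\<bar>u j\<bar> \<le> m" if "j \<le> M" for j
    unfolding m_def using that by (intro Max_ge[OF fin]) auto
  have "m \<in> (\<lambda>j. \<bar>u j\<bar>) ` {..M}" unfolding m_def by (rule Max_in[OF fin ne])
  then obtain j0 where j0: "j0 \<le> M" "m = \<bar>u j0\<bar>" by (metis imageE atMost_iff)
  have m0: "m \<ge> 0" using j0 by simp
  have "\<bar>\<Sum>j\<le>M. (-1) ^ (M - j) * real (M choose j) * u j\<bar> \<le> (\<Sum>j\<le>M. \<bar>(-1) ^ (M - j) * real (M choose j) * u j\<bar>)"
    by (rule sum_abs)
  also have "\<dots> = (\<Sum>j\<le>M. real (M choose j) * \<bar>u j\<bar>)"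
    by (simp add: abs_mult power_abs)
  also have "\<dots> \<le> (\<Sum>j\<le>M. real (M choose j) * m)"
    using mge by (intro sum_mono mult_left_mono) auto
  also have "\<dots> = 2^M * m"
  proof -
    have "(\<Sum>j\<le>M. real (M choose j)) = real (\<Sum>j\<le>M. M choose j)" by simp
    also have "\<dots> = 2^M" by (simp add: choose_row_sum)
    finally show ?thesis by (simp add: sum_distrib_right[symmetric])
  qed
  finally have le: "\<bar>\<Sum>j\<le>M. (-1) ^ (M - j) * real (M choose j) * u j\<bar> \<le> 2^M * m" .
  have "\<bar>\<Sum>j\<le>M. (-1) ^ (M - j) * real (M choose j) * u j\<bar> powr p \<le> (2^M * m) powr p"
    using le p by (intro powr_mono2) auto
  also have "\<dots> = (2^M) powr p * m powr p" using m0 by (simp add: powr_mult)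
  also have "m powr p \<le> (\<Sum>j\<le>M. \<bar>u j\<bar> powr p)"
    unfolding j0(2) by (rule member_le_sum[of j0 "{..M}" "\<lambda>j. \<bar>u j\<bar> powr p"]) (use j0 in auto)
  hence "(2^M) powr p * m powr p \<le> (2^M) powr p * (\<Sum>j\<le>M. \<bar>u j\<bar> powr p)"
    by (intro mult_left_mono) auto
  finally show ?thesis .
qed

lemma transl_integrable:
  fixes f :: "'a::euclidean_space \<Rightarrow> real"
  assumes "integrable lborel f" shows "integrable lborel (\<lambda>x. f (x + w))"
  using integrable_affine[OF assms, of 1 w] by (simp add: add.commute)

locale qsetup =
  fixes \<psi> :: "real^'n::finite \<Rightarrow> real" and r0 :: real
  assumes adm: "admissible_psi \<psi> r0"
begin

definition "R = 2 powr r0"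

lemma adm_r0: "r0 \<ge> 0" using adm unfolding admissible_psi_def by blast
lemma adm_smooth: "smooth_fun \<psi>" using adm unfolding admissible_psi_def by blast
lemma psi_nonneg: "\<psi> x \<ge> 0" using adm unfolding admissible_psi_def by blast
lemma adm_supp: "closure {x. \<psi> x \<noteq> 0} \<subseteq> ball 0 R" using adm unfolding admissible_psi_def R_def by blast
lemma adm_sum: "((\<lambda>k. \<psi> (x - int_vec k)) has_sum 1) UNIV" using adm unfolding admissible_psi_def by blast

lemma R_ge1: "R \<ge> 1"
  unfolding R_def using adm_r0 by (simp add: ge_one_powr_ge_zero)

lemma psi_supp: "\<psi> y \<noteq> 0 \<Longrightarrow> norm y < R"
proof -
  assume "\<psi> y \<noteq> 0"
  hence "y \<in> closure {x. \<psi> x \<noteq> 0}" by (intro subsetD[OF closure_subset]) simp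
  hence "y \<in> ball 0 R" using adm_supp by (rule subsetD[rotated])
  thus ?thesis by simp
qed

lemma psi_cont: "continuous_on UNIV \<psi>"
proof -
  have "\<psi> differentiable (at x)" for x
    using adm_smooth unfolding smooth_fun_def by (metis pdiffs.simps(1))
  thus ?thesis using continuous_at_imp_continuous_on differentiable_imp_continuous_within by blast
qed

lemma psi_meas[measurable]: "\<psi> \<in> borel_measurable borel"
  using psi_cont borel_measurable_continuous_onI by blast

lemma psi_ind: "\<psi> y = indicator (cball 0 R) y *\<^sub>R \<psi> y"
  using psi_supp[of y] by (cases "\<psi> y = 0") (auto simp: indicator_def)

lemma psi_pow_integrable:
  assumes "e > 0"
  shows "integrable lborel (\<lambda>y. \<bar>\<psi> y\<bar> powr e)"
proof -
  have c: "continuous_on (cball 0 R) (\<lambda>y. \<bar>\<psi> y\<bar> powr e)"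
    by (intro continuous_on_powr' continuous_intros continuous_on_subset[OF psi_cont]) (use assms in auto)
  have "integrable lborel (\<lambda>y. indicator (cball 0 R) y *\<^sub>R (\<bar>\<psi> y\<bar> powr e))"
    by (rule borel_integrable_compact[OF compact_cball c])
  moreover have "(\<lambda>y. indicator (cball 0 R) y *\<^sub>R (\<bar>\<psi> y\<bar> powr e)) = (\<lambda>y. \<bar>\<psi> y\<bar> powr e)"
    using psi_supp by (force simp: indicator_def)
  ultimately show ?thesis by simp
qed

lemma psi_bounded: obtains B where "B > 0" "\<And>y. \<bar>\<psi> y\<bar> \<le> B"
proof -
  have c: "continuous_on (cball 0 R) (\<lambda>y. norm (\<psi> y))"
    by (intro continuous_intros continuous_on_subset[OF psi_cont]) auto
  have ne: "cball (0::real^'n) R \<noteq> {}" using R_ge1 by auto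
  obtain y0 where "y0 \<in> cball (0::real^'n) R" "\<forall>y\<in>cball 0 R. norm (\<psi> y) \<le> norm (\<psi> y0)"
    using continuous_attains_sup[OF compact_cball ne c] by blast
  then have bnd: "\<bar>\<psi> y\<bar> \<le> \<bar>\<psi> y0\<bar> + 1" for y
  proof (cases "\<psi> y = 0")
    case False
    hence "y \<in> cball 0 R" using psi_supp[of y] by (simp add: mem_cball_0)
    hence "norm (\<psi> y) \<le> norm (\<psi> y0)" using \<open>\<forall>y\<in>cball 0 R. norm (\<psi> y) \<le> norm (\<psi> y0)\<close> by blast
    thus ?thesis by simp
  qed simp
  show ?thesis by (rule that[of "\<bar>\<psi> y0\<bar> + 1"]) (simp, rule bnd)
qed

lemma psi_somewhere: "\<exists>y. \<psi> y > 0"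
proof (rule ccontr)
  assume "\<not> ?thesis"
  have z: "\<psi> y = 0" for y
  proof -
    have "\<not> \<psi> y > 0" using \<open>\<not> (\<exists>y. \<psi> y > 0)\<close> by blast
    thus ?thesis using psi_nonneg[of y] by linarith
  qed

  have "((\<lambda>k. \<psi> (0 - int_vec k)) has_sum 1) UNIV" by (rule adm_sum)
  moreover have "((\<lambda>k::'n\<Rightarrow>int. \<psi> (0 - int_vec k)) has_sum 0) UNIV" by (simp add: z)
  ultimately show False using has_sum_unique by fastforce
qed


lemma psi_pos_int:
  assumes e: "e > 0" shows "integral\<^sup>L lborel (\<lambda>y. \<bar>\<psi> y\<bar> powr e) > 0"
proof -
  obtain y0 where y0: "\<psi> y0 > 0" using psi_somewhere by blast
  have "isCont \<psi> y0" using psi_cont by (simp add: continuous_on_eq_continuous_at)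
  then obtain d where d: "d > 0" and dd: "\<And>y. dist y y0 < d \<Longrightarrow> dist (\<psi> y) (\<psi> y0) < \<psi> y0 / 2"
    using y0 unfolding continuous_at_eps_delta by (metis half_gt_zero)
  define c where "c = (\<psi> y0 / 2) powr e"
  have c: "c > 0" unfolding c_def using y0 by simp
  have pw: "c * indicator (ball y0 d) y \<le> \<bar>\<psi> y\<bar> powr e" for y
  proof (cases "y \<in> ball y0 d")
    case True
    hence "dist y y0 < d" by (simp add: dist_commute)
    hence "\<bar>\<psi> y - \<psi> y0\<bar> < \<psi> y0 / 2" using dd[of y] by (simp add: dist_real_def)
    moreover have "\<psi> y0 - \<psi> y \<le> \<bar>\<psi> y - \<psi> y0\<bar>" by linarith
    ultimately have "\<psi> y > \<psi> y0 / 2" by linarith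
    hence "(\<psi> y0 / 2) powr e \<le> \<bar>\<psi> y\<bar> powr e" using y0 e by (intro powr_mono2) auto
    thus ?thesis using True unfolding c_def by simp
  qed simp
  have ib: "integrable lborel (\<lambda>y. c * indicator (ball y0 d) y)"
  proof -
    have "emeasure lborel (ball y0 d) < \<infinity>" by (rule emeasure_bounded_finite) simp
    hence "integrable lborel (indicator (ball y0 d) :: real^'n \<Rightarrow> real)"
      by (simp add: integrable_indicator_iff)
    thus ?thesis by simp
  qed
  have "0 < c * measure lborel (ball y0 d)" using c d by simp
  also have "\<dots> = integral\<^sup>L lborel (\<lambda>y. c * indicator (ball y0 d) y)" by simp
  also have "\<dots> \<le> integral\<^sup>L lborel (\<lambda>y. \<bar>\<psi> y\<bar> powr e)"
    by (rule integral_mono[OF ib psi_pow_integrable[OF e] pw])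
  finally show ?thesis .
qed


end

locale cons = qsetup \<psi> r0 for \<psi> :: "real^'n::finite \<Rightarrow> real" and r0 +
  fixes s p q :: real
  assumes s_pos: "s > 0" and p1: "p \<ge> 1" and q1: "q \<ge> 1"
begin

definition "K = nat \<lceil>4 * R\<rceil> + 1"
definition "i0 = (undefined :: 'n)"
definition z :: "nat \<Rightarrow> real^'n" where "z \<nu> = real (K * \<nu>) *\<^sub>R axis i0 1"
definition "mu \<nu> = (if \<exists>j. \<nu> = (2::nat)^j then real \<nu> else 0)"
definition "lam \<nu> = mu \<nu> powr (1/q)"
definition "a N \<nu> = lam \<nu> * 2 powr (-(real \<nu>) * (s - N/p))"
definition g :: "nat \<Rightarrow> real^'n \<Rightarrow> real" where "g \<nu> x = a (real CARD('n)) \<nu> * \<psi> (2^\<nu> *\<^sub>R (x - z \<nu>))"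
definition "F x = (\<Sum>\<nu>. g \<nu> x)"
definition mm :: "nat \<Rightarrow> 'n \<Rightarrow> int" where "mm \<nu> = (\<lambda>i. if i = i0 then int (2^\<nu> * K * \<nu>) else 0)"
definition coef :: "real \<Rightarrow> ('n \<Rightarrow> nat) \<Rightarrow> nat \<Rightarrow> ('n \<Rightarrow> int) \<Rightarrow> real" where "coef r \<beta> \<nu> m = (if \<beta> = (\<lambda>_. 0) \<and> m = mm \<nu> then lam \<nu> * 2 powr (-(real \<nu>) * (s - r)) else 0)"

lemma K_gt: "real K > 4 * R"
proof -
  have "real (nat \<lceil>4 * R\<rceil>) \<ge> 4 * R" by linarith
  thus ?thesis unfolding K_def by simp
qed

lemma mm_z: "int_vec (mm \<nu>) = 2^\<nu> *\<^sub>R z \<nu>"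
  unfolding int_vec_def mm_def z_def by (simp add: vec_eq_iff axis_def)

lemma arg_eq: "2^\<nu> *\<^sub>R x - int_vec (mm \<nu>) = 2^\<nu> *\<^sub>R (x - z \<nu>)"
  by (simp add: mm_z scaleR_diff_right)

lemma mu_nonneg: "mu \<nu> \<ge> 0" unfolding mu_def by simp
lemma lam_nonneg: "lam \<nu> \<ge> 0" unfolding lam_def by simp
lemma a_nonneg: "a N \<nu> \<ge> 0" unfolding a_def using lam_nonneg by simp
lemma g_nonneg: "g \<nu> x \<ge> 0" unfolding g_def using a_nonneg psi_nonneg by simp

lemma g_supp: "g \<nu> x \<noteq> 0 \<Longrightarrow> norm (x - z \<nu>) < R / 2^\<nu>"
proof -
  assume "g \<nu> x \<noteq> 0"
  hence "\<psi> (2^\<nu> *\<^sub>R (x - z \<nu>)) \<noteq> 0" unfolding g_def by simp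
  hence "norm (2^\<nu> *\<^sub>R (x - z \<nu>)) < R" by (rule psi_supp)
  hence "2^\<nu> * norm (x - z \<nu>) < R" by simp
  thus ?thesis by (simp add: field_simps)
qed

lemma R_div: "R / 2^\<nu> \<le> R"
  using R_ge1 by (simp add: divide_le_eq one_le_power order.trans[of R "R*1"] mult_left_mono)

lemma z_dist: "norm (z \<nu> - z \<nu>') = real K * \<bar>real \<nu> - real \<nu>'\<bar>"
proof -
  have "z \<nu> - z \<nu>' = (real K * (real \<nu> - real \<nu>')) *\<^sub>R axis i0 1"
    unfolding z_def by (simp add: algebra_simps)
  thus ?thesis by (simp add: abs_mult)
qed

lemma g_unique: "g \<nu> x \<noteq> 0 \<Longrightarrow> g \<nu>' x \<noteq> 0 \<Longrightarrow> \<nu> = \<nu>'"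
proof (rule ccontr)
  assume 1: "g \<nu> x \<noteq> 0" and 2: "g \<nu>' x \<noteq> 0" and ne: "\<nu> \<noteq> \<nu>'"
  have "norm (x - z \<nu>) < R" using g_supp[OF 1] R_div[of \<nu>] by linarith
  moreover have "norm (x - z \<nu>') < R" using g_supp[OF 2] R_div[of \<nu>'] by linarith
  ultimately have "norm (z \<nu> - z \<nu>') < 2 * R"
    using norm_triangle_ineq4[of "x - z \<nu>'" "x - z \<nu>"] by (simp add: norm_minus_commute)
  moreover have "\<bar>real \<nu> - real \<nu>'\<bar> \<ge> 1" using ne by linarith
  hence "real K * \<bar>real \<nu> - real \<nu>'\<bar> \<ge> real K" by (simp add: mult_le_cancel_left1)
  ultimately show False using z_dist[of \<nu> \<nu>'] K_gt R_ge1 by linarith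
qed

lemma g_sums: "(\<lambda>\<nu>. g \<nu> x) sums F x"
proof (cases "\<exists>\<nu>. g \<nu> x \<noteq> 0")
  case True
  then obtain \<nu> where nz: "g \<nu> x \<noteq> 0" by blast
  have eq: "(\<lambda>n. g n x) = (\<lambda>n. if n = \<nu> then g n x else 0)"
    using g_unique[OF nz] by fastforce
  have "(\<lambda>n. g n x) sums g \<nu> x" by (subst eq) (rule sums_single)
  thus ?thesis unfolding F_def by (simp add: sums_iff)
next
  case False
  hence "(\<lambda>n. g n x) = (\<lambda>n. 0)" by auto
  thus ?thesis unfolding F_def by simp
qed

lemma F_eq: "g \<nu> x \<noteq> 0 \<Longrightarrow> F x = g \<nu> x"
proof -
  assume nz: "g \<nu> x \<noteq> 0"
  have eq: "(\<lambda>n. g n x) = (\<lambda>n. if n = \<nu> then g n x else 0)"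
    using g_unique[OF nz] by fastforce
  have "(\<lambda>n. g n x) sums g \<nu> x" by (subst eq) (rule sums_single)
  thus ?thesis using g_sums sums_unique2 by blast
qed

lemma F_zero: "(\<And>\<nu>. g \<nu> x = 0) \<Longrightarrow> F x = 0"
  unfolding F_def by simp

lemma g_meas[measurable]: "g \<nu> \<in> borel_measurable borel"
  unfolding g_def by measurable

lemma F_meas[measurable]: "F \<in> borel_measurable borel"
  unfolding F_def by measurable

lemma scaled_eq: "2^\<nu> *\<^sub>R (x - w) = - (2^\<nu> *\<^sub>R w) + (2::real)^\<nu> *\<^sub>R (x::real^'n)"
  by (simp add: scaleR_diff_right)

lemma scaled_integrable:
  fixes f :: "real^'n \<Rightarrow> real"
  assumes "integrable lborel f"
  shows "integrable lborel (\<lambda>x. f (2^\<nu> *\<^sub>R (x - w)))"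
  using integrable_affine[OF assms, of "2^\<nu>" "-(2^\<nu> *\<^sub>R w)"] by (simp add: scaled_eq)

lemma pow2_card: "((2::real)^\<nu>)^CARD('n) = 2 powr (real \<nu> * real CARD('n))"
  by (simp add: powr_realpow[symmetric] powr_powr)

lemma scaled_integral:
  fixes f :: "real^'n \<Rightarrow> real"
  assumes "integrable lborel f"
  shows "integral\<^sup>L lborel (\<lambda>x. f (2^\<nu> *\<^sub>R (x - w))) = integral\<^sup>L lborel f * 2 powr (-(real \<nu> * real CARD('n)))"
proof -
  have "integral\<^sup>L lborel f = \<bar>(2::real)^\<nu>\<bar>^DIM(real^'n) * integral\<^sup>L lborel (\<lambda>x. f (-(2^\<nu> *\<^sub>R w) + (2::real)^\<nu> *\<^sub>R x))"
    by (rule int_affine) (use assms in auto)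
  also have "\<dots> = 2 powr (real \<nu> * real CARD('n)) * integral\<^sup>L lborel (\<lambda>x. f (2^\<nu> *\<^sub>R (x - w)))"
    by (simp add: scaled_eq pow2_card)
  finally show ?thesis by (simp add: powr_minus field_simps)
qed

lemma g_abs_pow: "e > 0 \<Longrightarrow> \<bar>g \<nu> x\<bar> powr e = a (real CARD('n)) \<nu> powr e * \<bar>\<psi> (2^\<nu> *\<^sub>R (x - z \<nu>))\<bar> powr e"
  unfolding g_def using a_nonneg psi_nonneg by (simp add: powr_mult abs_mult)

lemma g_pow_integrable: "e > 0 \<Longrightarrow> integrable lborel (\<lambda>x. \<bar>g \<nu> x\<bar> powr e)"
  unfolding g_abs_pow by (intro integrable_mult_right scaled_integrable psi_pow_integrable)

lemma g_pow_integral: "e > 0 \<Longrightarrow> integral\<^sup>L lborel (\<lambda>x. \<bar>g \<nu> x\<bar> powr e)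
   = a (real CARD('n)) \<nu> powr e * integral\<^sup>L lborel (\<lambda>y. \<bar>\<psi> y\<bar> powr e) * 2 powr (-(real \<nu> * real CARD('n)))"
proof -
  assume e: "e > 0"
  have "integral\<^sup>L lborel (\<lambda>x. \<bar>\<psi> (2^\<nu> *\<^sub>R (x - z \<nu>))\<bar> powr e) = integral\<^sup>L lborel (\<lambda>y. \<bar>\<psi> y\<bar> powr e) * 2 powr (-(real \<nu> * real CARD('n)))"
    by (rule scaled_integral[OF psi_pow_integrable[OF e]])
  thus ?thesis unfolding g_abs_pow[OF e] by simp
qed

lemma single_sums:
  assumes "H 0 = 0"
  shows "(\<lambda>n. H (g n x)) sums H (F x)"
proof (cases "\<exists>\<nu>. g \<nu> x \<noteq> 0")
  case True
  then obtain \<nu> where nz: "g \<nu> x \<noteq> 0" by blast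
  have eq: "(\<lambda>n. H (g n x)) = (\<lambda>n. if n = \<nu> then H (g n x) else 0)"
  proof (rule ext)
    fix n show "H (g n x) = (if n = \<nu> then H (g n x) else 0)"
    proof (cases "n = \<nu>")
      case False
      hence "g n x = 0" using g_unique[OF nz, of n] by auto
      thus ?thesis using False assms by simp
    qed simp
  qed
  have "(\<lambda>n. H (g n x)) sums H (g \<nu> x)" by (subst eq) (rule sums_single)
  thus ?thesis using F_eq[OF nz] by simp
next
  case False
  hence "(\<lambda>n. H (g n x)) = (\<lambda>n. 0)" using assms by auto
  thus ?thesis using F_zero False assms by auto
qed

lemma mu_le: "mu \<nu> \<le> real \<nu>" unfolding mu_def by simp

lemma lam_powr_le: "e > 0 \<Longrightarrow> lam \<nu> powr e \<le> real \<nu> powr (e/q)"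
proof -
  assume e: "e > 0"
  have "lam \<nu> powr e = mu \<nu> powr (e/q)" unfolding lam_def by (simp add: powr_powr)
  also have "\<dots> \<le> real \<nu> powr (e/q)" using mu_le mu_nonneg q1 e by (intro powr_mono2) auto
  finally show ?thesis .
qed

lemma p_pos: "p > 0" using p1 by simp
lemma q_pos: "q > 0" using q1 by simp

lemma Lp_term_bound:
  "a (real CARD('n)) \<nu> powr p * 2 powr (-(real \<nu> * real CARD('n))) \<le> real \<nu> powr (p/q) * 2 powr (-(s*p) * real \<nu>)"
proof -
  let ?N = "real CARD('n)"
  have "a ?N \<nu> powr p = lam \<nu> powr p * (2 powr (-(real \<nu>) * (s - ?N/p))) powr p"
    unfolding a_def using lam_nonneg by (simp add: powr_mult)
  also have "(2 powr (-(real \<nu>) * (s - ?N/p))) powr p = 2 powr (-(real \<nu>) * (s*p - ?N))"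
    using p_pos by (simp add: powr_powr algebra_simps)
  finally have "a ?N \<nu> powr p * 2 powr (-(real \<nu> * ?N)) = lam \<nu> powr p * (2 powr (-(real \<nu>) * (s*p - ?N)) * 2 powr (-(real \<nu> * ?N)))"
    by simp
  also have "2 powr (-(real \<nu>) * (s*p - ?N)) * 2 powr (-(real \<nu> * ?N)) = 2 powr (-(s*p) * real \<nu>)"
    by (simp add: powr_add[symmetric] algebra_simps)
  finally show ?thesis using lam_powr_le[OF p_pos, of \<nu>]
    by (simp add: mult_right_mono)
qed

lemma F_in_Lp: "in_Lp p F"
proof -
  let ?f = "\<lambda>i x. \<bar>g i x\<bar> powr p"
  have int: "integrable lborel (?f i)" for i using g_pow_integrable p_pos by simp
  have sm: "AE x in lborel. summable (\<lambda>i. norm (?f i x))"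
  proof (rule AE_I2)
    fix x
    have "(\<lambda>i. ?f i x) sums \<bar>F x\<bar> powr p" using single_sums[of "\<lambda>t. \<bar>t\<bar> powr p" x] by simp
    thus "summable (\<lambda>i. norm (?f i x))" by (simp add: sums_summable)
  qed
  define Ip where "Ip = integral\<^sup>L lborel (\<lambda>y. \<bar>\<psi> y\<bar> powr p)"
  have Ip: "Ip \<ge> 0" unfolding Ip_def by simp
  have "summable (\<lambda>i. Ip * (real i powr (p/q) * 2 powr (-(s*p) * real i)))"
    using s_pos p_pos by (intro summable_mult poly_geo_summable) simp
  hence sm2: "summable (\<lambda>i. integral\<^sup>L lborel (\<lambda>x. norm (?f i x)))"
  proof (rule summable_comparison_test')
    fix i :: nat
    have "norm (integral\<^sup>L lborel (\<lambda>x. norm (?f i x))) = a (real CARD('n)) i powr p * Ip * 2 powr (-(real i * real CARD('n)))"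
      using g_pow_integral[OF p_pos, of i] unfolding Ip_def by simp
    also have "\<dots> \<le> Ip * (real i powr (p/q) * 2 powr (-(s*p) * real i))"
      using Lp_term_bound[of i] Ip by (simp add: mult_left_mono mult.commute mult.left_commute)
    finally show "norm (integral\<^sup>L lborel (\<lambda>x. norm (?f i x))) \<le> Ip * (real i powr (p/q) * 2 powr (-(s*p) * real i))" .
  qed
  have "integrable lborel (\<lambda>x. \<Sum>i. ?f i x)" by (rule integrable_suminf[OF int sm sm2])
  moreover have "(\<lambda>x. \<Sum>i. ?f i x) = (\<lambda>x. \<bar>F x\<bar> powr p)"
    using single_sums[of "\<lambda>t. \<bar>t\<bar> powr p"] by (simp add: sums_iff)
  ultimately show ?thesis unfolding in_Lp_def by simp
qed

lemma mu_sum_le: fixes y :: real assumes y0: "0 \<le> y"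
  shows "(\<Sum>\<nu><n. mu \<nu> * y^\<nu>) \<le> (\<Sum>j<n. 2^j * y^(2^j))"
proof -
  let ?A = "{j. (2::nat)^j < n}"
  have fin: "finite ?A"
  proof (rule finite_subset[of _ "{..<n}"])
    show "?A \<subseteq> {..<n}"
    proof
      fix j assume "j \<in> ?A"
      hence "2^j < n" by simp
      moreover have "j < 2^j" by (rule less_exp)
      ultimately show "j \<in> {..<n}" by (simp add: order.strict_trans[of j "2^j" n])
    qed
  qed simp
  have "(\<Sum>\<nu><n. mu \<nu> * y^\<nu>) = (\<Sum>\<nu>\<in>(\<lambda>j. (2::nat)^j) ` ?A. mu \<nu> * y^\<nu>)"
  proof (rule sum.mono_neutral_right)
    show "(\<lambda>j. (2::nat)^j) ` ?A \<subseteq> {..<n}" by auto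
    show "\<forall>i\<in>{..<n} - (\<lambda>j. (2::nat)^j) ` ?A. mu i * y^i = 0"
      unfolding mu_def by auto
  qed simp
  also have "\<dots> = (\<Sum>j\<in>?A. mu (2^j) * y^(2^j))"
    using sum.reindex[of "\<lambda>j. (2::nat)^j" ?A "\<lambda>\<nu>. mu \<nu> * y^\<nu>"] by (simp add: inj_on_def)
  also have "\<dots> = (\<Sum>j\<in>?A. 2^j * y^(2^j))" unfolding mu_def by auto
  also have "\<dots> \<le> (\<Sum>j<n. 2^j * y^(2^j))"
  proof (rule sum_mono2)
    show "?A \<subseteq> {..<n}"
    proof
      fix j assume "j \<in> ?A"
      hence "2^j < n" by simp
      moreover have "j < 2^j" by (rule less_exp)
      ultimately show "j \<in> {..<n}" by (simp add: order.strict_trans[of j "2^j" n])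
    qed
  qed (use y0 in auto)
  finally show ?thesis .
qed


lemma ennpow_ennreal: "v \<ge> 0 \<Longrightarrow> ennpow (ennreal v) e = ennreal (v powr e)"
  by (simp add: ennpow_def)

lemma ennpow_0: "ennpow 0 e = 0"
  by (simp add: ennpow_def)

lemma nn_single: "(\<integral>\<^sup>+ m. (if m = m0 then ennreal v else 0) \<partial>count_space UNIV) = ennreal v"
proof -
  have "(\<lambda>m. if m = m0 then ennreal v else 0) = (\<lambda>m. ennreal v * indicator {m0} m)"
    by (auto simp: indicator_def)
  hence "(\<integral>\<^sup>+ m. (if m = m0 then ennreal v else 0) \<partial>count_space UNIV) = ennreal v * emeasure (count_space UNIV) {m0}"
    by (simp add: nn_integral_cmult_indicator)
  thus ?thesis by simp
qed

definition "cl r \<nu> = lam \<nu> * 2 powr (-(real \<nu>) * (s - r))"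

lemma cl_nonneg: "cl r \<nu> \<ge> 0" unfolding cl_def using lam_nonneg by simp

lemma cl_powr_q: "cl r \<nu> powr q = mu \<nu> * (2 powr (-((s-r)*q)))^\<nu>"
proof -
  have "cl r \<nu> powr q = lam \<nu> powr q * (2 powr (-(real \<nu>) * (s - r))) powr q"
    unfolding cl_def using lam_nonneg by (simp add: powr_mult)
  also have "lam \<nu> powr q = mu \<nu>" unfolding lam_def using q_pos mu_nonneg by (simp add: powr_powr)
  also have "(2 powr (-(real \<nu>) * (s - r))) powr q = (2 powr (-((s-r)*q)))^\<nu>"
    by (simp add: powr_powr powr_realpow[symmetric] algebra_simps)
  finally show ?thesis .
qed

lemma level_val:
  "ennpow (ennpow (\<integral>\<^sup>+ m. ennreal (\<bar>coef r (\<lambda>_. 0) \<nu> m\<bar> powr p) \<partial>count_space UNIV) (1/p)) q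
     = ennreal (mu \<nu> * (2 powr (-((s-r)*q)))^\<nu>)"
proof -
  have "(\<lambda>m. ennreal (\<bar>coef r (\<lambda>_. 0) \<nu> m\<bar> powr p)) = (\<lambda>m. if m = mm \<nu> then ennreal (cl r \<nu> powr p) else 0)"
    unfolding coef_def cl_def[symmetric] using cl_nonneg by (auto intro!: ext)
  hence h1: "(\<integral>\<^sup>+ m. ennreal (\<bar>coef r (\<lambda>_. 0) \<nu> m\<bar> powr p) \<partial>count_space UNIV) = ennreal (cl r \<nu> powr p)"
    by (simp only: nn_single)
  have h2: "ennpow (ennreal (cl r \<nu> powr p)) (1/p) = ennreal (cl r \<nu>)"
    using cl_nonneg p_pos by (simp add: ennpow_ennreal powr_powr)
  have h3: "ennpow (ennreal (cl r \<nu>)) q = ennreal (cl r \<nu> powr q)"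
    using cl_nonneg by (simp add: ennpow_ennreal)
  show ?thesis unfolding h1 h2 h3 cl_powr_q ..
qed

lemma level_val0:
  fixes \<beta> :: "'n \<Rightarrow> nat"
  assumes "\<beta> \<noteq> (\<lambda>_. 0)"
  shows "ennreal (2 powr (\<rho> * real (mabs \<beta>))) * ennpow (\<integral>\<^sup>+ \<nu>. ennpow (ennpow (\<integral>\<^sup>+ m. ennreal (\<bar>coef r \<beta> \<nu> m\<bar> powr p) \<partial>count_space UNIV) (1/p)) q \<partial>count_space UNIV) (1/q) = 0"
proof -
  have "(\<lambda>m. ennreal (\<bar>coef r \<beta> \<nu> m\<bar> powr p)) = (\<lambda>m. 0)" for \<nu>
    unfolding coef_def using assms by simp
  thus ?thesis by (simp add: ennpow_0)
qed

lemma coef_norm_le: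
  assumes r: "0 < r" "r < s"
  shows "coef_norm \<rho> p q (coef r) \<le> ennreal ((3 / (1 - 2 powr (-((s-r)*q)))) powr (1/q))"
proof -
  define Y where "Y = 2 powr (-((s-r)*q))"
  have Y0: "0 \<le> Y" unfolding Y_def by simp
  have Y1: "Y < 1" unfolding Y_def using r q_pos by (simp add: powr_less_one)
  have nn: "0 \<le> mu \<nu> * Y^\<nu>" for \<nu> using mu_nonneg Y0 by simp
  have part: "(\<Sum>\<nu><n. mu \<nu> * Y^\<nu>) \<le> 3/(1-Y)" for n
    using mu_sum_le[OF Y0, of n] pow2_sum_bound[OF Y0 Y1, of n] by linarith
  have sm: "summable (\<lambda>\<nu>. mu \<nu> * Y^\<nu>)"
    by (rule bounded_imp_summable[OF nn, where B="3/(1-Y)"]) (use part[of "Suc _"] in \<open>simp only: lessThan_Suc_atMost[symmetric]\<close>)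
  have S: "(\<Sum>\<nu>. mu \<nu> * Y^\<nu>) \<le> 3/(1-Y)" by (rule suminf_le_const[OF sm part])
  have S0: "(\<Sum>\<nu>. mu \<nu> * Y^\<nu>) \<ge> 0" by (rule suminf_nonneg[OF sm nn])
  show ?thesis
    unfolding coef_norm_def
  proof (rule SUP_least)
    fix \<beta> :: "'n \<Rightarrow> nat"
    show "ennreal (2 powr (\<rho> * real (mabs \<beta>))) * ennpow (\<integral>\<^sup>+ \<nu>. ennpow (ennpow (\<integral>\<^sup>+ m. ennreal (\<bar>coef r \<beta> \<nu> m\<bar> powr p) \<partial>count_space UNIV) (1/p)) q \<partial>count_space UNIV) (1/q)
        \<le> ennreal ((3 / (1 - 2 powr (-((s-r)*q)))) powr (1/q))"
    proof (cases "\<beta> = (\<lambda>_. 0)")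
      case False
      thus ?thesis by (simp add: level_val0)
    next
      case True
      have m0: "mabs (\<lambda>_::'n. 0::nat) = 0" unfolding mabs_def by simp
      have "(\<integral>\<^sup>+ \<nu>. ennpow (ennpow (\<integral>\<^sup>+ m. ennreal (\<bar>coef r (\<lambda>_. 0) \<nu> m\<bar> powr p) \<partial>count_space UNIV) (1/p)) q \<partial>count_space UNIV)
          = (\<Sum>\<nu>. ennreal (mu \<nu> * Y^\<nu>))"
        unfolding level_val Y_def by (simp add: nn_integral_count_space_nat)
      also have "\<dots> = ennreal (\<Sum>\<nu>. mu \<nu> * Y^\<nu>)" by (rule suminf_ennreal2[OF nn sm])
      finally have eq: "(\<integral>\<^sup>+ \<nu>. ennpow (ennpow (\<integral>\<^sup>+ m. ennreal (\<bar>coef r (\<lambda>_. 0) \<nu> m\<bar> powr p) \<partial>count_space UNIV) (1/p)) q \<partial>count_space UNIV)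
          = ennreal (\<Sum>\<nu>. mu \<nu> * Y^\<nu>)" .
      have "(\<Sum>\<nu>. mu \<nu> * Y^\<nu>) powr (1/q) \<le> (3/(1-Y)) powr (1/q)"
        using S S0 q_pos by (intro powr_mono2) auto
      thus ?thesis using True S0 by (simp add: m0 eq ennpow_ennreal Y_def)
    qed
  qed
qed

lemma quark0: "quark \<psi> r p (\<lambda>_. 0) \<nu> (mm \<nu>) x = 2 powr (- real \<nu> * (r - real CARD('n) / p)) * \<psi> (2^\<nu> *\<^sub>R (x - z \<nu>))"
  unfolding quark_def Let_def mpow_def arg_eq by simp

lemma coef_quark: "coef r (\<lambda>_. 0) \<nu> (mm \<nu>) * quark \<psi> r p (\<lambda>_. 0) \<nu> (mm \<nu>) x = g \<nu> x"
proof -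
  have "2 powr (-(real \<nu>) * (s - r)) * 2 powr (- real \<nu> * (r - real CARD('n) / p)) = 2 powr (-(real \<nu>) * (s - real CARD('n)/p))"
    by (simp add: powr_add[symmetric] algebra_simps)
  thus ?thesis unfolding quark0 coef_def g_def a_def by (simp add: mult.assoc)
qed

lemma schwartz_bounded:
  assumes "schwartz \<phi>" obtains B where "B \<ge> 0" "\<And>x. \<bar>\<phi> x\<bar> \<le> B"
proof -
  have "bounded (range (\<lambda>x. (1 + norm x) ^ 0 * pdiffs [] \<phi> x))"
    using assms unfolding schwartz_def by blast
  hence "bounded (range \<phi>)" by simp
  then obtain B where "\<And>x. norm (\<phi> x) \<le> B" by (auto simp: bounded_iff)
  moreover hence "B \<ge> 0" using norm_ge_zero order.trans by blast
  ultimately show ?thesis using that by simp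
qed

lemma schwartz_meas:
  assumes "schwartz \<phi>" shows "\<phi> \<in> borel_measurable borel"
proof -
  have "\<phi> differentiable (at x)" for x
    using assms unfolding schwartz_def smooth_fun_def by (metis pdiffs.simps(1))
  hence "continuous_on UNIV \<phi>" using continuous_at_imp_continuous_on differentiable_imp_continuous_within by blast
  thus ?thesis by (rule borel_measurable_continuous_onI)
qed

lemma L1_term_bound:
  "a (real CARD('n)) \<nu> * 2 powr (-(real \<nu> * real CARD('n))) \<le> real \<nu> powr (1/q) * 2 powr (-s * real \<nu>)"
proof -
  let ?N = "real CARD('n)"
  have e: "2 powr (-(real \<nu>) * (s - ?N/p) + -(real \<nu> * ?N)) = 2 powr (-(real \<nu>) * (s - ?N/p)) * 2 powr (-(real \<nu> * ?N))"
    by (rule powr_add)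
  have "a ?N \<nu> * 2 powr (-(real \<nu> * ?N)) = lam \<nu> * 2 powr (-(real \<nu>) * (s - ?N/p) + -(real \<nu> * ?N))"
    unfolding a_def e by (simp add: mult.assoc)
  also have "\<dots> \<le> lam \<nu> * 2 powr (-s * real \<nu>)"
  proof (rule mult_left_mono)
    have "?N / p \<le> ?N" using p1 by (simp add: divide_le_eq mult_le_cancel_left1)
    hence h: "real \<nu> * (?N/p) \<le> real \<nu> * ?N" by (intro mult_left_mono) simp_all
    have "-(real \<nu>) * (s - ?N/p) + -(real \<nu> * ?N) = -s * real \<nu> + (real \<nu> * (?N/p) - real \<nu> * ?N)"
      by (simp add: algebra_simps)
    hence "-(real \<nu>) * (s - ?N/p) + -(real \<nu> * ?N) \<le> -s * real \<nu>" using h by linarith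
    thus "2 powr (-(real \<nu>) * (s - ?N/p) + -(real \<nu> * ?N)) \<le> 2 powr (-s * real \<nu>)" by simp
  qed (rule lam_nonneg)
  also have "\<dots> \<le> real \<nu> powr (1/q) * 2 powr (-s * real \<nu>)"
    using lam_powr_le[of 1 \<nu>] lam_nonneg by (intro mult_right_mono) auto
  finally show ?thesis .
qed

lemma pairing_sums:
  assumes \<phi>: "schwartz \<phi>"
  shows "((\<lambda>\<nu>. integral\<^sup>L lborel (\<lambda>x. g \<nu> x * \<phi> x)) has_sum integral\<^sup>L lborel (\<lambda>x. F x * \<phi> x)) UNIV"
proof -
  obtain B where B0: "B \<ge> 0" and B: "\<And>x. \<bar>\<phi> x\<bar> \<le> B" using schwartz_bounded[OF \<phi>] by blast
  have [measurable]: "\<phi> \<in> borel_measurable borel" by (rule schwartz_meas[OF \<phi>])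
  let ?f = "\<lambda>i x. g i x * \<phi> x"
  have gi: "integrable lborel (\<lambda>x. \<bar>g i x\<bar>)" for i
    using g_pow_integrable[of 1 i] by simp
  have pw: "\<bar>g i x\<bar> * \<bar>\<phi> x\<bar> \<le> B * \<bar>g i x\<bar>" for i x
    using mult_left_mono[OF B[of x], of "\<bar>g i x\<bar>"] by (simp add: mult.commute)
  have int: "integrable lborel (?f i)" for i
  proof -
    have I: "integrable lborel (\<lambda>x. B * \<bar>g i x\<bar>)" using gi by simp
    have M: "(\<lambda>x. g i x * \<phi> x) \<in> borel_measurable lborel" by measurable
    have A: "AE x in lborel. norm (g i x * \<phi> x) \<le> norm (B * \<bar>g i x\<bar>)"
      using pw B0 by (simp add: abs_mult)
    show ?thesis by (rule Bochner_Integration.integrable_bound[OF I M A])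
  qed
  have sm: "AE x in lborel. summable (\<lambda>i. norm (?f i x))"
  proof (rule AE_I2)
    fix x
    have "(\<lambda>i. norm (?f i x)) sums norm (F x * \<phi> x)" using single_sums[of "\<lambda>t. norm (t * \<phi> x)" x] by simp
    thus "summable (\<lambda>i. norm (?f i x))" by (simp add: sums_summable)
  qed
  define I1 where "I1 = integral\<^sup>L lborel (\<lambda>y. \<bar>\<psi> y\<bar> powr 1)"
  have I1: "I1 \<ge> 0" unfolding I1_def by simp
  have bnd: "integral\<^sup>L lborel (\<lambda>x. norm (?f i x)) \<le> B * I1 * (real i powr (1/q) * 2 powr (-s * real i))" for i
  proof -
    have "integral\<^sup>L lborel (\<lambda>x. norm (?f i x)) \<le> integral\<^sup>L lborel (\<lambda>x. B * \<bar>g i x\<bar> powr 1)"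
    proof (rule integral_mono)
      show "integrable lborel (\<lambda>x. norm (?f i x))" using int by simp
      show "integrable lborel (\<lambda>x. B * \<bar>g i x\<bar> powr 1)" using gi by simp
      show "norm (?f i x) \<le> B * \<bar>g i x\<bar> powr 1" for x
        using pw[of i x] by (simp add: abs_mult)
    qed
    also have "\<dots> = B * (a (real CARD('n)) i * I1 * 2 powr (-(real i * real CARD('n))))"
      using g_pow_integral[of 1 i] unfolding I1_def using a_nonneg by simp
    also have "\<dots> = B * I1 * (a (real CARD('n)) i * 2 powr (-(real i * real CARD('n))))" by (simp add: algebra_simps)
    also have "\<dots> \<le> B * I1 * (real i powr (1/q) * 2 powr (-s * real i))"
      using L1_term_bound[of i] B0 I1 by (intro mult_left_mono) auto
    finally show ?thesis .
  qed
  have "summable (\<lambda>i. B * I1 * (real i powr (1/q) * 2 powr (-s * real i)))"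
    using s_pos by (intro summable_mult poly_geo_summable) simp
  hence sm2: "summable (\<lambda>i. integral\<^sup>L lborel (\<lambda>x. norm (?f i x)))"
  proof (rule summable_comparison_test')
    fix i :: nat
    show "norm (integral\<^sup>L lborel (\<lambda>x. norm (?f i x))) \<le> B * I1 * (real i powr (1/q) * 2 powr (-s * real i))"
      using bnd[of i] by simp
  qed
  have eq: "integral\<^sup>L lborel (\<lambda>x. \<Sum>i. ?f i x) = (\<Sum>i. integral\<^sup>L lborel (?f i))"
    by (rule integral_suminf[OF int sm sm2])
  have feq: "(\<lambda>x. \<Sum>i. ?f i x) = (\<lambda>x. F x * \<phi> x)"
    using single_sums[of "\<lambda>t. t * \<phi> x" for x] by (simp add: sums_iff)
  have summ: "summable (\<lambda>i. integral\<^sup>L lborel (?f i))"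
  proof (rule summable_comparison_test'[OF sm2])
    fix i :: nat
    show "norm (integral\<^sup>L lborel (?f i)) \<le> integral\<^sup>L lborel (\<lambda>x. norm (?f i x))"
      by (rule integral_norm_bound)
  qed
  have nsumm: "summable (\<lambda>i. norm (integral\<^sup>L lborel (?f i)))"
  proof (rule summable_comparison_test'[OF sm2])
    fix i :: nat
    show "norm (norm (integral\<^sup>L lborel (?f i))) \<le> integral\<^sup>L lborel (\<lambda>x. norm (?f i x))"
      by simp
  qed
  have "(\<lambda>i. integral\<^sup>L lborel (?f i)) sums integral\<^sup>L lborel (\<lambda>x. F x * \<phi> x)"
    using summ eq feq by (simp add: summable_sums)
  thus ?thesis by (rule norm_summable_imp_has_sum[OF nsumm])
qed

lemma F_repr: "quark_repr \<psi> r p F (coef r)"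
  unfolding quark_repr_def
proof (intro allI impI)
  fix \<phi> :: "real^'n \<Rightarrow> real" assume \<phi>: "schwartz \<phi>"
  define T where "T = (\<lambda>(\<beta>, \<nu>, m). coef r \<beta> \<nu> m * integral\<^sup>L lborel (\<lambda>x. quark \<psi> r p \<beta> \<nu> m x * \<phi> x))"
  define h where "h = (\<lambda>\<nu>::nat. ((\<lambda>_::'n. 0::nat), \<nu>, mm \<nu>))"
  have inj: "inj_on h UNIV" unfolding h_def by (auto simp: inj_on_def)
  have Th: "(T \<circ> h) \<nu> = integral\<^sup>L lborel (\<lambda>x. g \<nu> x * \<phi> x)" for \<nu>
  proof -
    have "(T \<circ> h) \<nu> = integral\<^sup>L lborel (\<lambda>x. coef r (\<lambda>_. 0) \<nu> (mm \<nu>) * (quark \<psi> r p (\<lambda>_. 0) \<nu> (mm \<nu>) x * \<phi> x))"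
      unfolding T_def h_def by simp
    also have "\<dots> = integral\<^sup>L lborel (\<lambda>x. g \<nu> x * \<phi> x)"
      by (simp only: mult.assoc[symmetric] coef_quark)
    finally show ?thesis .
  qed
  have "(T has_sum integral\<^sup>L lborel (\<lambda>x. F x * \<phi> x)) (h ` UNIV)"
    unfolding has_sum_reindex[OF inj] Th[abs_def] by (rule pairing_sums[OF \<phi>])
  moreover have "(T has_sum integral\<^sup>L lborel (\<lambda>x. F x * \<phi> x)) UNIV \<longleftrightarrow> (T has_sum integral\<^sup>L lborel (\<lambda>x. F x * \<phi> x)) (h ` UNIV)"
  proof (rule has_sum_cong_neutral)
    fix w assume "w \<in> UNIV - h ` UNIV"
    then obtain \<beta> \<nu> m where w: "w = (\<beta>, \<nu>, m)" and nh: "(\<beta>, \<nu>, m) \<notin> range h" by (cases w) auto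
    have "coef r \<beta> \<nu> m = 0"
    proof (rule ccontr)
      assume "coef r \<beta> \<nu> m \<noteq> 0"
      hence "\<beta> = (\<lambda>_. 0) \<and> m = mm \<nu>" unfolding coef_def by (auto split: if_splits)
      hence "(\<beta>, \<nu>, m) = h \<nu>" unfolding h_def by simp
      thus False using nh by simp
    qed
    thus "T w = 0" unfolding T_def w by simp
  qed auto
  ultimately show "(T has_sum integral\<^sup>L lborel (\<lambda>x. F x * \<phi> x)) UNIV" by simp
qed

definition hv :: "nat \<Rightarrow> real^'n" where "hv \<nu> = (2 * R / 2^\<nu>) *\<^sub>R axis i0 1"

lemma norm_hv: "norm (hv \<nu>) = 2 * R / 2^\<nu>"
  unfolding hv_def using R_ge1 by simp

lemma far_zero:
  assumes M: "real M \<le> 2^\<nu>" and nz: "g \<nu> x \<noteq> 0" and j: "1 \<le> j" "j \<le> M"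
  shows "g \<nu>' (x + real j *\<^sub>R hv \<nu>) = 0"
proof (rule ccontr)
  let ?y = "x + real j *\<^sub>R hv \<nu>"
  assume nz': "g \<nu>' ?y \<noteq> 0"
  have x1: "norm (x - z \<nu>) < R / 2^\<nu>" by (rule g_supp[OF nz])
  have y1: "norm (?y - z \<nu>') < R / 2^\<nu>'" by (rule g_supp[OF nz'])
  have nj: "norm (real j *\<^sub>R hv \<nu>) = real j * (2 * R / 2^\<nu>)" by (simp add: norm_hv)
  have Rp: "R / 2^\<nu> > 0" using R_ge1 by simp
  show False
  proof (cases "\<nu>' = \<nu>")
    case True
    have "1 * (2 * R / 2^\<nu>) \<le> real j * (2 * R / 2^\<nu>)" by (rule mult_right_mono) (use j Rp in auto)
    hence a1: "2 * R / 2^\<nu> \<le> norm (real j *\<^sub>R hv \<nu>)" using nj by simp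
    have eqj: "real j *\<^sub>R hv \<nu> = (?y - z \<nu>) - (x - z \<nu>)" by (simp add: algebra_simps)
    have "norm ((?y - z \<nu>) - (x - z \<nu>)) \<le> norm (?y - z \<nu>) + norm (x - z \<nu>)" by (rule norm_triangle_ineq4)
    hence a2: "norm (real j *\<^sub>R hv \<nu>) \<le> norm (?y - z \<nu>) + norm (x - z \<nu>)" by (subst eqj)
    have a3: "norm (?y - z \<nu>) < R / 2^\<nu>" using y1 True by simp
    have a4: "2 * R / 2^\<nu> = R / 2^\<nu> + R / 2^\<nu>" by simp
    show False using a1 a2 a3 a4 x1 by linarith
  next
    case False
    have "real j * (2 * R / 2^\<nu>) \<le> real M * (2 * R / 2^\<nu>)" using j Rp by (intro mult_right_mono) auto
    also have "\<dots> \<le> 2^\<nu> * (2 * R / 2^\<nu>)" using M Rp by (intro mult_right_mono) auto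
    also have "\<dots> = 2 * R" by simp
    finally have jh: "norm (real j *\<^sub>R hv \<nu>) \<le> 2 * R" using nj by simp
    have x2: "norm (x - z \<nu>) < R" using x1 R_div[of \<nu>] by linarith
    have y2: "norm (?y - z \<nu>') < R" using y1 R_div[of \<nu>'] by linarith
    have eqz: "z \<nu> - z \<nu>' = (?y - z \<nu>') - (x - z \<nu>) - real j *\<^sub>R hv \<nu>" by (simp add: algebra_simps)
    have "norm (z \<nu> - z \<nu>') = norm ((?y - z \<nu>') - (x - z \<nu>) - real j *\<^sub>R hv \<nu>)" by (subst eqz) (rule refl)
    moreover have "norm ((?y - z \<nu>') - (x - z \<nu>) - real j *\<^sub>R hv \<nu>) \<le> norm ((?y - z \<nu>') - (x - z \<nu>)) + norm (real j *\<^sub>R hv \<nu>)"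
      by (rule norm_triangle_ineq4)
    moreover have "norm ((?y - z \<nu>') - (x - z \<nu>)) \<le> norm (?y - z \<nu>') + norm (x - z \<nu>)"
      by (rule norm_triangle_ineq4)
    ultimately have "norm (z \<nu> - z \<nu>') \<le> norm (?y - z \<nu>') + norm (x - z \<nu>) + norm (real j *\<^sub>R hv \<nu>)"
      by linarith
    hence lt: "norm (z \<nu> - z \<nu>') < 4 * R" using x2 y2 jh by linarith
    have "\<bar>real \<nu> - real \<nu>'\<bar> \<ge> 1" using False by linarith
    hence "real K * \<bar>real \<nu> - real \<nu>'\<bar> \<ge> real K" by (simp add: mult_le_cancel_left1)
    thus False using z_dist[of \<nu> \<nu>'] K_gt lt by linarith
  qed
qed

lemma fdiff_pointwise:
  assumes M: "real M \<le> 2^\<nu>"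
  shows "\<bar>g \<nu> x\<bar> \<le> \<bar>fdiff M (hv \<nu>) F x\<bar>"
proof (cases "g \<nu> x = 0")
  case False
  let ?t = "\<lambda>j. (-1) ^ (M - j) * real (M choose j) * F (x + real j *\<^sub>R hv \<nu>)"
  have z: "?t j = 0" if "j \<in> {..M} - {0}" for j
  proof -
    have "F (x + real j *\<^sub>R hv \<nu>) = 0"
      by (rule F_zero, rule far_zero[OF M False]) (use that in auto)
    thus ?thesis by simp
  qed
  have "fdiff M (hv \<nu>) F x = ?t 0 + (\<Sum>j\<in>{..M} - {0}. ?t j)"
    unfolding fdiff_def by (rule sum.remove) auto
  also have "(\<Sum>j\<in>{..M} - {0}. ?t j) = 0" using z by (rule sum.neutral[OF ballI])
  finally have "fdiff M (hv \<nu>) F x = (-1) ^ M * F x" by simp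
  thus ?thesis using F_eq[OF False] by (simp add: abs_mult power_abs)
qed simp

lemma fdiff_meas[measurable]: "fdiff M h F \<in> borel_measurable borel"
  unfolding fdiff_def by measurable

lemma fdiff_integrable: "integrable lborel (\<lambda>x. \<bar>fdiff M h F x\<bar> powr p)"
proof -
  have FL: "integrable lborel (\<lambda>x. \<bar>F x\<bar> powr p)" using F_in_Lp unfolding in_Lp_def by simp
  let ?G = "\<lambda>x. (2^M) powr p * (\<Sum>j\<le>M. \<bar>F (x + real j *\<^sub>R h)\<bar> powr p)"
  have tj: "integrable lborel (\<lambda>x. \<bar>F (x + real j *\<^sub>R h)\<bar> powr p)" for j
    using transl_integrable[OF FL, of "real j *\<^sub>R h"] by simp
  have "integrable lborel (\<lambda>x. \<Sum>j\<le>M. \<bar>F (x + real j *\<^sub>R h)\<bar> powr p)"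
    by (rule Bochner_Integration.integrable_sum) (rule tj)
  hence I: "integrable lborel ?G" by (rule integrable_mult_right)
  have Me: "(\<lambda>x. \<bar>fdiff M h F x\<bar> powr p) \<in> borel_measurable lborel" by measurable
  have A: "AE x in lborel. norm (\<bar>fdiff M h F x\<bar> powr p) \<le> norm (?G x)"
  proof (rule AE_I2)
    fix x
    have "\<bar>fdiff M h F x\<bar> powr p \<le> ?G x"
      unfolding fdiff_def by (rule diff_sum_bound[OF p_pos])
    moreover have "?G x \<ge> 0" by (intro mult_nonneg_nonneg sum_nonneg) auto
    ultimately show "norm (\<bar>fdiff M h F x\<bar> powr p) \<le> norm (?G x)" by simp
  qed
  show ?thesis by (rule Bochner_Integration.integrable_bound[OF I Me A])
qed

lemma Lp_lower:
  assumes M: "real M \<le> 2^\<nu>"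
  shows "Lp_norm p (fdiff M (hv \<nu>) F) \<ge> a (real CARD('n)) \<nu> * integral\<^sup>L lborel (\<lambda>y. \<bar>\<psi> y\<bar> powr p) powr (1/p) * 2 powr (-(real \<nu> * real CARD('n)) / p)"
proof -
  let ?N = "real CARD('n)"
  define Ip where "Ip = integral\<^sup>L lborel (\<lambda>y. \<bar>\<psi> y\<bar> powr p)"
  have Ip: "Ip \<ge> 0" unfolding Ip_def by simp
  have "integral\<^sup>L lborel (\<lambda>x. \<bar>g \<nu> x\<bar> powr p) \<le> integral\<^sup>L lborel (\<lambda>x. \<bar>fdiff M (hv \<nu>) F x\<bar> powr p)"
  proof (rule integral_mono[OF g_pow_integrable[OF p_pos] fdiff_integrable])
    fix x show "\<bar>g \<nu> x\<bar> powr p \<le> \<bar>fdiff M (hv \<nu>) F x\<bar> powr p"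
      using fdiff_pointwise[OF M, of x] p_pos by (intro powr_mono2) auto
  qed
  hence le: "a ?N \<nu> powr p * Ip * 2 powr (-(real \<nu> * ?N)) \<le> integral\<^sup>L lborel (\<lambda>x. \<bar>fdiff M (hv \<nu>) F x\<bar> powr p)"
    unfolding g_pow_integral[OF p_pos] Ip_def .
  have "(a ?N \<nu> powr p * Ip * 2 powr (-(real \<nu> * ?N))) powr (1/p) \<le> Lp_norm p (fdiff M (hv \<nu>) F)"
    unfolding Lp_norm_def using le p_pos Ip a_nonneg by (intro powr_mono2) auto
  moreover have "(a ?N \<nu> powr p * Ip * 2 powr (-(real \<nu> * ?N))) powr (1/p) = a ?N \<nu> * Ip powr (1/p) * 2 powr (-(real \<nu> * ?N) / p)"
    using p_pos Ip a_nonneg by (simp add: powr_mult powr_powr)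
  ultimately show ?thesis unfolding Ip_def by simp
qed

lemma val_lower:
  assumes M: "real M \<le> 2^\<nu>"
  shows "norm (hv \<nu>) powr (-s) * Lp_norm p (fdiff M (hv \<nu>) F) \<ge> (2 * R) powr (-s) * integral\<^sup>L lborel (\<lambda>y. \<bar>\<psi> y\<bar> powr p) powr (1/p) * lam \<nu>"
proof -
  let ?N = "real CARD('n)"
  let ?I = "integral\<^sup>L lborel (\<lambda>y. \<bar>\<psi> y\<bar> powr p) powr (1/p)"
  have R0: "R > 0" using R_ge1 by simp
  have nh: "norm (hv \<nu>) powr (-s) = (2 * R) powr (-s) * 2 powr (real \<nu> * s)"
  proof -
    have "2 * R / 2^\<nu> = (2 * R) * 2 powr (-real \<nu>)"
      by (simp add: powr_minus powr_realpow divide_inverse)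
    hence "norm (hv \<nu>) powr (-s) = ((2 * R) * 2 powr (-real \<nu>)) powr (-s)" unfolding norm_hv by simp
    also have "\<dots> = (2 * R) powr (-s) * (2 powr (-real \<nu>)) powr (-s)" using R0 by (simp add: powr_mult)
    also have "(2 powr (-real \<nu>)) powr (-s) = 2 powr (real \<nu> * s)" by (simp add: powr_powr)
    finally show ?thesis .
  qed
  have key: "2 powr (real \<nu> * s) * (a ?N \<nu> * 2 powr (-(real \<nu> * ?N) / p)) = lam \<nu>"
  proof -
    have "2 powr (real \<nu> * s) * (a ?N \<nu> * 2 powr (-(real \<nu> * ?N) / p))
        = lam \<nu> * (2 powr (real \<nu> * s) * 2 powr (-(real \<nu>) * (s - ?N/p)) * 2 powr (-(real \<nu> * ?N) / p))"
      unfolding a_def by (simp add: algebra_simps)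
    also have "2 powr (real \<nu> * s) * 2 powr (-(real \<nu>) * (s - ?N/p)) * 2 powr (-(real \<nu> * ?N) / p) = 2 powr (real \<nu> * s + -(real \<nu>) * (s - ?N/p) + -(real \<nu> * ?N) / p)"
      by (simp only: powr_add)
    also have "real \<nu> * s + -(real \<nu>) * (s - ?N/p) + -(real \<nu> * ?N) / p = 0"
      by (simp add: algebra_simps)
    finally show ?thesis by simp
  qed
  have "(2 * R) powr (-s) * ?I * lam \<nu> = (2 * R) powr (-s) * ?I * (2 powr (real \<nu> * s) * (a ?N \<nu> * 2 powr (-(real \<nu> * ?N) / p)))"
    unfolding key ..
  also have "\<dots> = norm (hv \<nu>) powr (-s) * (a ?N \<nu> * ?I * 2 powr (-(real \<nu> * ?N) / p))"
    by (simp add: nh algebra_simps)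
  also have "\<dots> \<le> norm (hv \<nu>) powr (-s) * Lp_norm p (fdiff M (hv \<nu>) F)"
    by (intro mult_left_mono Lp_lower[OF M]) simp
  finally show ?thesis .
qed

lemma F_not_besov: "\<not> besov_inf s p F"
proof
  assume "besov_inf s p F"
  then obtain M :: nat where "real M > s" and
    bdd: "bdd_above ((\<lambda>h. norm h powr (-s) * Lp_norm p (fdiff M h F)) ` (UNIV - {0}))"
    unfolding besov_inf_def by blast
  then obtain Bd where Bd: "\<And>h. h \<noteq> 0 \<Longrightarrow> norm h powr (-s) * Lp_norm p (fdiff M h F) \<le> Bd"
    unfolding bdd_above_def by auto
  define C where "C = (2 * R) powr (-s) * integral\<^sup>L lborel (\<lambda>y. \<bar>\<psi> y\<bar> powr p) powr (1/p)"
  have C: "C > 0" unfolding C_def using R_ge1 psi_pos_int[OF p_pos] by simp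
  define X where "X = max 0 (Bd / C)"
  have X0: "X \<ge> 0" unfolding X_def by simp
  define j where "j = M + nat \<lceil>X powr q\<rceil>"
  define \<nu> :: nat where "\<nu> = 2^j"
  have jn: "j < \<nu>" unfolding \<nu>_def by (rule less_exp)
  have Mn: "real M \<le> 2^\<nu>"
  proof -
    have "M < \<nu>" using jn unfolding j_def by simp
    also have "\<nu> < 2^\<nu>" by (rule less_exp)
    finally show ?thesis by (simp add: of_nat_less_iff[symmetric])
  qed
  have "X powr q \<le> real j" unfolding j_def by linarith
  hence Xn: "X powr q < real \<nu>" using jn by linarith
  have lamv: "lam \<nu> = real \<nu> powr (1/q)" unfolding lam_def mu_def \<nu>_def by auto
  have "X = (X powr q) powr (1/q)" using X0 q_pos by (simp add: powr_powr)
  also have "\<dots> < real \<nu> powr (1/q)" using Xn q_pos X0 by (intro powr_less_mono2) auto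
  finally have Xl: "X < lam \<nu>" unfolding lamv .
  have "Bd \<le> C * X" unfolding X_def using C by (simp add: field_simps max_def)
  also have "\<dots> < C * lam \<nu>" using Xl C by simp
  also have "\<dots> \<le> norm (hv \<nu>) powr (-s) * Lp_norm p (fdiff M (hv \<nu>) F)"
    using val_lower[OF Mn] unfolding C_def by simp
  also have "\<dots> \<le> Bd"
  proof (rule Bd)
    show "hv \<nu> \<noteq> 0" unfolding hv_def using R_ge1 by simp
  qed
  finally show False by simp
qed

end

theorem theorem2p14:
  fixes \<psi> :: "real^'n::finite \<Rightarrow> real" and r0 \<rho> s p q :: real
  assumes "admissible_psi \<psi> r0" and "\<rho> > r0"
    and "s > 0" and "1 \<le> p" and "1 \<le> q"
  shows "\<exists>f :: real^'n \<Rightarrow> real. in_Lp p f \<and>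
           (SUP r\<in>{0<..<s}. ennreal ((s - r) powr (1/q)) * quark_besov_norm \<psi> \<rho> r p q f) < \<infinity> \<and>
           \<not> besov_inf s p f"
proof -
  interpret cons \<psi> r0 s p q
  proof unfold_locales
    show "admissible_psi \<psi> r0" by (rule assms(1))
    show "s > 0" by (rule assms(3))
    show "1 \<le> p" by (rule assms(4))
    show "1 \<le> q" by (rule assms(5))
  qed
  define C where "C = (3 * (1 + s*q*ln 2) / (q * ln 2)) powr (1/q)"
  have bnd: "ennreal ((s - r) powr (1/q)) * quark_besov_norm \<psi> \<rho> r p q F \<le> ennreal C"
    if r: "r \<in> {0<..<s}" for r
  proof -
    have r0: "0 < r" "r < s" using r by auto
    define B where "B = 3 / (1 - 2 powr (-((s-r)*q)))"
    have B0: "B \<ge> 0"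
    proof -
      have "2 powr (-((s-r)*q)) < 1" using r0 q_pos by (simp add: powr_less_one)
      thus ?thesis unfolding B_def by simp
    qed
    have "quark_besov_norm \<psi> \<rho> r p q F \<le> coef_norm \<rho> p q (coef r)"
      unfolding quark_besov_norm_def by (rule INF_lower) (rule CollectI, rule F_repr)
    also have "\<dots> \<le> ennreal (B powr (1/q))" unfolding B_def by (rule coef_norm_le[OF r0])
    finally have qb: "quark_besov_norm \<psi> \<rho> r p q F \<le> ennreal (B powr (1/q))" .
    have "ennreal ((s - r) powr (1/q)) * quark_besov_norm \<psi> \<rho> r p q F \<le> ennreal ((s - r) powr (1/q)) * ennreal (B powr (1/q))"
      by (rule mult_left_mono[OF qb]) simp
    also have "\<dots> = ennreal (((s - r) * B) powr (1/q))"
      using r0 B0 by (simp add: ennreal_mult[symmetric] powr_mult)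
    also have "\<dots> \<le> ennreal C"
    proof -
      have "(s - r) * B \<le> 3 * (1 + s*q*ln 2) / (q * ln 2)" unfolding B_def by (rule sr_bound[OF r0 q_pos])
      hence "((s - r) * B) powr (1/q) \<le> C" unfolding C_def using r0 B0 q_pos by (intro powr_mono2) auto
      thus ?thesis by (rule ennreal_leI)
    qed
    finally show ?thesis .
  qed
  have "(SUP r\<in>{0<..<s}. ennreal ((s - r) powr (1/q)) * quark_besov_norm \<psi> \<rho> r p q F) \<le> ennreal C"
    by (rule SUP_least) (rule bnd)
  hence fin: "(SUP r\<in>{0<..<s}. ennreal ((s - r) powr (1/q)) * quark_besov_norm \<psi> \<rho> r p q F) < \<infinity>"
    by (rule order.strict_trans1) simp
  show ?thesis
    by (rule exI[of _ F], intro conjI F_in_Lp F_not_besov fin)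
qed

end
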